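(* Let $\Sigma$ be a finite alphabet, let $X,Y\subseteq\Sigma^{\mathbb{Z}}$ be shift spaces, and let $\mu$ be a shift-invariant ergodic Borel probability measure on $Y$. Then \[R_0(X,Y,\mu)\le\inf\left\{\nu\big(\{(\mathbf{x},\mathbf{y})\in X\times Y:\mathbf{x}_0\ne\mathbf{y}_0\}\big):\ \nu\in M_{\mathcal{E}}(X,Y,\mu)\right\}.\]
   Context: $T$ is the left shift on $\Sigma^{\mathbb{Z}}$; a shift space is a closed $T$-invariant subset. On $X\times Y$ the shift acts by $T(\mathbf{x},\mathbf{y})=(T\mathbf{x},T\mathbf{y})$. An extension of $\mu$ is a shift-invariant Borel probability measure $\nu$ on $X\times Y$ with $\nu(X\times A)=\mu(A)$ for all measurable $A\subseteq Y$; $M_{\mathcal{E}}(X,Y,\mu)$ is the set of extensions that are ergodic for the shift on $X\times Y$. $\mathscr{B}_n(X)$ is the set of length-$n$ words appearing as consecutive subwords of elements of $X$; $d$ is Hamming distance, $B_r$ the Hamming ball. For $A,C\subseteq\Sigma^n$, a probability measure $\eta$ on $\Sigma^n$ and $\varepsilon>0$: $R_\varepsilon(C,A,\eta)=\min\{r\in\mathbb{Z}_{\ge0}:\eta(A\cap\bigcup_{\overline{x}\in C}B_r(\overline{x}))\ge1-\varepsilon\}$. With $\mu_n$ the marginal of $\mu$ on coordinates $0,\dots,n-1$: $R_\varepsilon(X,Y,\mu)=\liminf_n\frac1nR_\varepsilon(\mathscr{B}_n(X),\mathscr{B}_n(Y),\mu_n)$, and $R_0(X,Y,\mu)=\lim_{\varepsilon\to0}R_\varepsilon(X,Y,\mu)$.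 *)

theory Defs
  imports "HOL-Probability.Probability"
begin

definition shift :: "(int \<Rightarrow> 'a) \<Rightarrow> (int \<Rightarrow> 'a)" where
  "shift x = (\<lambda>i. x (i + 1))"

definition shift2 :: "(int \<Rightarrow> 'a) \<times> (int \<Rightarrow> 'a) \<Rightarrow> (int \<Rightarrow> 'a) \<times> (int \<Rightarrow> 'a)" where
  "shift2 p = (shift (fst p), shift (snd p))"

definition seq_topology :: "(int \<Rightarrow> 'a) topology" where
  "seq_topology = product_topology (\<lambda>_. discrete_topology UNIV) UNIV"

definition shift_space :: "(int \<Rightarrow> 'a) set \<Rightarrow> bool" where
  "shift_space X \<longleftrightarrow> closedin seq_topology X \<and> shift ` X = X"

(* Borel sigma-algebra on \<Sigma>^\<int> = product sigma-algebra of the discrete ones *)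
definition seq_M :: "(int \<Rightarrow> 'a) measure" where
  "seq_M = PiM UNIV (\<lambda>_. count_space UNIV)"

definition invariant_measure :: "'b measure \<Rightarrow> ('b \<Rightarrow> 'b) \<Rightarrow> bool" where
  "invariant_measure M f \<longleftrightarrow> f \<in> M \<rightarrow>\<^sub>M M \<and> distr M M f = M"

definition ergodic_measure :: "'b measure \<Rightarrow> ('b \<Rightarrow> 'b) \<Rightarrow> bool" where
  "ergodic_measure M f \<longleftrightarrow> invariant_measure M f \<and>
     (\<forall>A\<in>sets M. f -` A \<inter> space M = A \<longrightarrow> measure M A = 0 \<or> measure M A = 1)"

(* shift-invariant ergodic Borel probability measure on Y (as a measure on \<Sigma>^\<int> with full mass on Y) *)
definition ergodic_on :: "(int \<Rightarrow> 'a) set \<Rightarrow> (int \<Rightarrow> 'a) measure \<Rightarrow> bool" where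
  "ergodic_on Y \<mu> \<longleftrightarrow> sets \<mu> = sets seq_M \<and> prob_space \<mu> \<and> emeasure \<mu> Y = 1 \<and>
     ergodic_measure \<mu> shift"

definition ergodic_extensions ::
  "(int \<Rightarrow> 'a) set \<Rightarrow> (int \<Rightarrow> 'a) set \<Rightarrow> (int \<Rightarrow> 'a) measure
     \<Rightarrow> ((int \<Rightarrow> 'a) \<times> (int \<Rightarrow> 'a)) measure set" where
  "ergodic_extensions X Y \<mu> = {\<nu>. sets \<nu> = sets (seq_M \<Otimes>\<^sub>M seq_M) \<and> prob_space \<nu> \<and>
     emeasure \<nu> (X \<times> Y) = 1 \<and> ergodic_measure \<nu> shift2 \<and>
     (\<forall>A\<in>sets seq_M. A \<subseteq> Y \<longrightarrow> measure \<nu> (X \<times> A) = measure \<mu> A)}"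

definition subword :: "(int \<Rightarrow> 'a) \<Rightarrow> int \<Rightarrow> nat \<Rightarrow> 'a list" where
  "subword x i n = map (\<lambda>j. x (i + int j)) [0..<n]"

definition language :: "(int \<Rightarrow> 'a) set \<Rightarrow> nat \<Rightarrow> 'a list set" where
  "language X n = {subword x i n | x i. x \<in> X}"

definition marginal :: "(int \<Rightarrow> 'a) measure \<Rightarrow> nat \<Rightarrow> 'a list set \<Rightarrow> real" where
  "marginal \<mu> n S = measure \<mu> {x \<in> space \<mu>. subword x 0 n \<in> S}"

definition hamming :: "'a list \<Rightarrow> 'a list \<Rightarrow> nat" where
  "hamming u v = card {i. i < length u \<and> u ! i \<noteq> v ! i}"

definition hball :: "'a list \<Rightarrow> nat \<Rightarrow> 'a list set" where
  "hball v r = {u. length u = length v \<and> hamming u v \<le> r}"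

(* R_eps(C,A,eta); the minimum of an empty set is +\<infinity> *)
definition R_words :: "real \<Rightarrow> 'a list set \<Rightarrow> 'a list set \<Rightarrow> ('a list set \<Rightarrow> real) \<Rightarrow> ereal" where
  "R_words \<epsilon> C A \<eta> = Inf {ereal (real r) | r::nat. \<eta> (A \<inter> (\<Union>c\<in>C. hball c r)) \<ge> 1 - \<epsilon>}"

definition R_rate :: "real \<Rightarrow> (int \<Rightarrow> 'a) set \<Rightarrow> (int \<Rightarrow> 'a) set \<Rightarrow> (int \<Rightarrow> 'a) measure \<Rightarrow> ereal" where
  "R_rate \<epsilon> X Y \<mu> =
     liminf (\<lambda>n. R_words \<epsilon> (language X n) (language Y n) (marginal \<mu> n) / ereal (real n))"

definition R_zero :: "(int \<Rightarrow> 'a) set \<Rightarrow> (int \<Rightarrow> 'a) set \<Rightarrow> (int \<Rightarrow> 'a) measure \<Rightarrow> ereal" where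
  "R_zero X Y \<mu> = Lim (at_right 0) (\<lambda>\<epsilon>. R_rate \<epsilon> X Y \<mu>)"

end

theory Submission
  imports Defs
begin


lemma block_sum:
  fixes a :: "nat \<Rightarrow> real" and t :: "nat \<Rightarrow> nat"
  assumes a: "\<And>j. 0 \<le> a j" and h: "0 \<le> h"
    and t: "\<And>k. 1 \<le> t k \<and> t k \<le> N \<and> real (t k) * h \<le> (\<Sum>j<t k. a (k+j))"
  shows "(real L - real N) * h \<le> (\<Sum>j<L. a j)"
proof -
  have main: "\<forall>k. L - k = m \<longrightarrow> k \<le> L \<longrightarrow> (real L - real k - real N) * h \<le> (\<Sum>j\<in>{k..<L}. a j)" for m
  proof (induction m rule: less_induct)
    case (less m)
    show ?case
    proof (intro allI impI)
      fix k assume km: "L - k = m" and kL: "k \<le> L"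
      show "(real L - real k - real N) * h \<le> (\<Sum>j\<in>{k..<L}. a j)"
      proof (cases "L - k \<le> N")
        case True
        then have "(real L - real k - real N) * h \<le> 0" using h kL
          by (simp add: mult_nonpos_nonneg)
        also have "0 \<le> (\<Sum>j\<in>{k..<L}. a j)" by (rule sum_nonneg) (use a in auto)
        finally show ?thesis .
      next
        case False
        have tk: "1 \<le> t k" "t k \<le> N" "real (t k) * h \<le> (\<Sum>j<t k. a (k+j))" using t[of k] by auto
        have IH: "(real L - real (k + t k) - real N) * h \<le> (\<Sum>j\<in>{k + t k..<L}. a j)"
        proof -
          have lt: "L - (k + t k) < m" using km kL False tk by auto
          have "k + t k \<le> L" using False tk by auto
          then show ?thesis using spec[OF less.IH[OF lt], of "k + t k"] by blast
        qed
        have split: "(\<Sum>j\<in>{k..<L}. a j) = (\<Sum>j\<in>{k..<k + t k}. a j) + (\<Sum>j\<in>{k + t k..<L}. a j)"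
          using False tk kL by (intro sum.atLeastLessThan_concat[symmetric]) auto
        have shn: "(\<Sum>j\<in>{k..<k + n}. a j) = (\<Sum>j<n. a (k+j))" for n
          by (induction n) (auto simp: sum.atLeastLessThan_Suc)
        have sh: "(\<Sum>j\<in>{k..<k + t k}. a j) = (\<Sum>j<t k. a (k+j))" by (rule shn)
        have eq: "(real L - real k - real N)*h = (real L - real (k + t k) - real N)*h + real (t k) * h"
          by (simp add: algebra_simps)
        show ?thesis using IH tk(3) split sh eq by linarith
      qed
    qed
  qed
  show ?thesis using main[of L, rule_format, of 0] by (simp add: lessThan_atLeast0)
qed

lemma aux_frac:
  fixes m i s :: real assumes "0 < m"
  shows "(i+s)/(1+m) - s/m = i/(1+m) - s/(m*(1+m))"
proof -
  have n1: "1 + m \<noteq> 0" "m \<noteq> 0" using assms by auto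
  have a: "(i+s)/(1+m) = i/(1+m) + s/(1+m)" by (simp add: add_divide_distrib)
  have b: "s/(1+m) - s/m = (s*m - s*(1+m))/((1+m)*m)" by (rule diff_frac_eq) (use n1 in auto)
  have c: "s*m - s*(1+m) = - s" by (simp add: algebra_simps)
  have d: "(- s)/((1+m)*m) = - (s/(m*(1+m)))" by (simp add: mult.commute)
  show ?thesis using a b c d by simp
qed

locale erg = prob_space M for M +
  fixes T
  assumes T_meas[measurable]: "T \<in> M \<rightarrow>\<^sub>M M"
    and T_inv: "distr M M T = M"
    and T_erg: "\<And>A. A \<in> sets M \<Longrightarrow> T -` A \<inter> space M = A \<Longrightarrow> measure M A = 0 \<or> measure M A = 1"
begin

lemma Tn_meas[measurable]: "(T ^^ n) \<in> M \<rightarrow>\<^sub>M M"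
  by (induction n) (auto intro: measurable_comp)

lemma Tn_space: "x \<in> space M \<Longrightarrow> (T ^^ n) x \<in> space M"
  using measurable_space[OF Tn_meas] by blast

lemma Tn_distr: "distr M M (T ^^ n) = M"
proof (induction n)
  case 0 then show ?case by (simp add: distr_id[unfolded id_def])
next
  case (Suc n)
  have "distr M M (T ^^ Suc n) = distr (distr M M (T ^^ n)) M T"
    by (subst distr_distr) (auto simp: comp_def)
  then show ?case by (simp only: Suc.IH T_inv)
qed

lemma integral_Tn:
  fixes f :: "_ \<Rightarrow> real"
  assumes [measurable]: "f \<in> borel_measurable M"
  shows "integral\<^sup>L M (\<lambda>x. f ((T ^^ n) x)) = integral\<^sup>L M f"
  using integral_distr[OF Tn_meas assms, of n] Tn_distr by simp

definition S :: "'a set \<Rightarrow> nat \<Rightarrow> 'a \<Rightarrow> real" where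
  "S D n x = (\<Sum>j<n. indicator D ((T ^^ j) x))"

lemma S_meas[measurable]: "D \<in> sets M \<Longrightarrow> S D n \<in> borel_measurable M"
  unfolding S_def by (intro borel_measurable_sum measurable_compose[OF Tn_meas borel_measurable_indicator])

lemma S_nonneg: "0 \<le> S D n x"
  unfolding S_def by (simp add: sum_nonneg)

lemma S_le: "S D n x \<le> real n"
proof -
  have "S D n x \<le> (\<Sum>j<n. 1)" unfolding S_def by (intro sum_mono) (auto simp: indicator_def)
  then show ?thesis by simp
qed

lemma S_Suc: "S D (Suc n) x = indicator D x + S D n (T x)"
  unfolding S_def sum.lessThan_Suc_shift by (simp add: funpow_Suc_right del: funpow.simps)

definition g :: "'a set \<Rightarrow> 'a \<Rightarrow> ereal" where
  "g D x = limsup (\<lambda>n. ereal (S D n x / real n))"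

lemma g_meas[measurable]: "D \<in> sets M \<Longrightarrow> g D \<in> borel_measurable M"
  unfolding g_def by (intro borel_measurable_limsup) (auto intro!: borel_measurable_divide)

lemma g_inv: "g D (T x) = g D x"
proof -
  define w where "w n = S D (n+1) x / real (n+1) - S D n (T x) / real n" for n
  have wb: "norm (w n) \<le> 2 / real (n+1)" for n
  proof (cases "n = 0")
    case True
    then show ?thesis unfolding w_def using S_Suc[of D 0 x] by (simp add: S_def indicator_def)
  next
    case False
    define i where "i = (indicator D x :: real)"
    define s where "s = S D n (T x)"
    have i: "0 \<le> i" "i \<le> 1" unfolding i_def by (auto simp: indicator_def)
    have s: "0 \<le> s" "s \<le> real n" unfolding s_def by (auto simp: S_nonneg S_le)
    have np: "0 < real n" using False by simp
    have weq: "w n = i / real (n+1) - s / (real n * real (n+1))"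
    proof -
      have "w n = (i + s) / real (n+1) - s / real n"
        unfolding w_def i_def s_def using S_Suc[of D n x] by simp
      also have "\<dots> = i / real (n+1) - s / (real n * real (n+1))"
        using aux_frac[OF np, of i s] by simp
      finally show ?thesis .
    qed
    have "s / (real n * real (n+1)) \<le> real n / (real n * real (n+1))"
      using s np by (intro divide_right_mono) auto
    also have "\<dots> = 1 / real (n+1)" using np by simp
    finally have a1: "s / (real n * real (n+1)) \<le> 1 / real (n+1)" .
    have a2: "0 \<le> s / (real n * real (n+1))" using s np by simp
    have a3: "i / real (n+1) \<le> 1 / real (n+1)" using i by (intro divide_right_mono) auto
    have a4: "0 \<le> i / real (n+1)" using i by simp
    have "2 / real (n+1) = 1 / real (n+1) + 1 / real (n+1)" by simp
    then show ?thesis using weq a1 a2 a3 a4 by (simp add: abs_le_iff)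
  qed
  have w0: "w \<longlonglongrightarrow> 0"
  proof (rule Lim_null_comparison)
    show "\<forall>\<^sub>F n in sequentially. norm (w n) \<le> 2 / real (Suc n)" using wb by simp
    show "(\<lambda>n. 2 / real (Suc n)) \<longlonglongrightarrow> 0"
      using LIMSEQ_Suc[OF lim_const_over_n[of "2::real"]] by simp
  qed
  have lw: "limsup (\<lambda>n. ereal (w n)) = 0"
    using lim_imp_Limsup[of sequentially "\<lambda>n. ereal (w n)" 0] w0 by (simp add: zero_ereal_def)
  have lw': "limsup (\<lambda>n. ereal (- w n)) = 0"
  proof -
    have "(\<lambda>n. - w n) \<longlonglongrightarrow> 0" using tendsto_minus[OF w0] by simp
    then show ?thesis
      using lim_imp_Limsup[of sequentially "\<lambda>n. ereal (- w n)" 0] by (simp add: zero_ereal_def)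
  qed
  define u where "u n = ereal (S D n (T x) / real n)" for n
  define v where "v n = ereal (S D (n+1) x / real (n+1))" for n
  have gv: "g D x = limsup v"
    unfolding g_def v_def using limsup_shift[of "\<lambda>n. ereal (S D n x / real n)"] by simp
  have gu: "g D (T x) = limsup u" unfolding g_def u_def by simp
  have "limsup v = limsup (\<lambda>n. u n + ereal (w n))"
    unfolding u_def v_def w_def by simp
  also have "\<dots> \<le> limsup u + limsup (\<lambda>n. ereal (w n))" by (rule ereal_limsup_add_mono)
  finally have 1: "limsup v \<le> limsup u" using lw by simp
  have "limsup u = limsup (\<lambda>n. v n + ereal (- w n))"
    unfolding u_def v_def w_def by simp
  also have "\<dots> \<le> limsup v + limsup (\<lambda>n. ereal (- w n))" by (rule ereal_limsup_add_mono)
  finally have 2: "limsup u \<le> limsup v" using lw' by simp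
  show ?thesis using 1 2 gu gv by simp
qed

definition E :: "'a set \<Rightarrow> real \<Rightarrow> 'a set" where
  "E D c = {x \<in> space M. ereal c < g D x}"

lemma E_sets: assumes [measurable]: "D \<in> sets M" shows "E D c \<in> sets M"
  unfolding E_def by measurable

lemma E_inv: "T -` E D c \<inter> space M = E D c"
  unfolding E_def using g_inv measurable_space[OF T_meas] by auto

lemma E_T: "x \<in> E D c \<Longrightarrow> T x \<in> E D c"
proof -
  assume "x \<in> E D c"
  then have "x \<in> T -` E D c \<inter> space M" using E_inv[of D c] by simp
  then show "T x \<in> E D c" by simp
qed

lemma E_Tn: "x \<in> E D c \<Longrightarrow> (T ^^ n) x \<in> E D c"
  by (induction n) (auto intro: E_T)

lemma E_witness:
  assumes "x \<in> E D c" shows "\<exists>n\<ge>1. real n * c < S D n x"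
proof -
  have "ereal c < g D x" using assms unfolding E_def by auto
  have "\<exists>\<^sub>F n in sequentially. ereal c < ereal (S D n x / real n)"
  proof (rule ccontr)
    assume "\<not> (\<exists>\<^sub>F n in sequentially. ereal c < ereal (S D n x / real n))"
    then have "\<forall>\<^sub>F n in sequentially. ereal (S D n x / real n) \<le> ereal c"
      by (simp add: not_frequently not_less)
    then have "g D x \<le> ereal c" unfolding g_def by (rule Limsup_bounded)
    then show False using \<open>ereal c < g D x\<close> by simp
  qed
  then obtain n where n: "n \<ge> 1" "c < S D n x / real n"
    unfolding frequently_sequentially by auto
  then have "real n * c < S D n x" using n by (simp add: field_simps)
  then show ?thesis using n by auto
qed

lemma KW:
  assumes D[measurable]: "D \<in> sets M" and c: "0 < c"
  shows "c * measure M (E D c) \<le> measure M D"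
proof -
  define EN where "EN N = {x \<in> E D c. \<forall>n\<in>{1..N}. S D n x \<le> real n * c}" for N
  have Em[measurable]: "E D c \<in> sets M" by (rule E_sets) simp
  have EN_sets[measurable]: "EN N \<in> sets M" for N
  proof -
    have "EN N = E D c \<inter> {x \<in> space M. \<forall>n\<in>{1..N}. S D n x \<le> real n * c}"
      unfolding EN_def E_def by auto
    also have "\<dots> \<in> sets M" by measurable
    finally show ?thesis .
  qed
  have dec: "decseq EN" unfolding decseq_def EN_def by auto
  have inter: "(\<Inter>N. EN N) = {}"
  proof (rule ccontr)
    assume "(\<Inter>N. EN N) \<noteq> {}"
    then obtain x where x: "\<And>N. x \<in> EN N" by blast
    then have "x \<in> E D c" unfolding EN_def by auto
    then obtain n where n: "n \<ge> 1" "real n * c < S D n x" using E_witness by blast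
    have "S D n x \<le> real n * c" using x[of n] n unfolding EN_def by auto
    then show False using n by simp
  qed
  have limEN: "(\<lambda>N. measure M (EN N)) \<longlonglongrightarrow> 0"
  proof -
    have "range EN \<subseteq> sets M" using EN_sets by blast
    then show ?thesis using finite_Lim_measure_decseq[of EN] inter dec by simp
  qed
  have key: "(real L - real N) * c * measure M (E D c) \<le> real L * (measure M D + c * measure M (EN N))"
    if N1: "N \<ge> 1" for L N
  proof -
    define f' where "f' x = indicator D x + c * indicator (EN N) x" for x :: 'a
    have f'm[measurable]: "f' \<in> borel_measurable M" unfolding f'_def by measurable
    have f'nn: "0 \<le> f' x" for x using c by (simp add: f'_def)
    have f'b: "f' x \<le> 1 + c" for x using c by (auto simp: f'_def indicator_def)
    have intf': "integrable M f'"
      by (rule integrable_const_bound[where B="1 + c"]) (use f'nn f'b in auto)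
    have intn: "integrable M (\<lambda>x. f' ((T ^^ j) x))" for j
      by (rule integrable_const_bound[where B="1 + c"]) (use f'nn f'b in auto)
    have t3: "integrable M (\<lambda>x. \<Sum>j<L. f' ((T ^^ j) x))"
      by (rule Bochner_Integration.integrable_sum) (rule intn)
    have pw: "(real L - real N) * c * indicator (E D c) x \<le> (\<Sum>j<L. f' ((T ^^ j) x))" for x
    proof (cases "x \<in> E D c")
      case False
      have "0 \<le> (\<Sum>j<L. f' ((T ^^ j) x))" by (rule sum_nonneg) (use f'nn in auto)
      then show ?thesis using False by simp
    next
      case True
      define t where "t k = (if (T^^k) x \<in> EN N then 1 else (LEAST n. 1 \<le> n \<and> real n * c < S D n ((T^^k) x)))" for k
      have tk: "1 \<le> t k \<and> t k \<le> N \<and> real (t k) * c \<le> (\<Sum>j<t k. f' ((T^^(k+j)) x))" for k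
      proof -
        define y where "y = (T^^k) x"
        have yE: "y \<in> E D c" using E_Tn True y_def by auto
        have shift: "(T^^(k+j)) x = (T^^j) y" for j
          by (simp add: y_def add.commute[of k j] funpow_add)
        show ?thesis
        proof (cases "y \<in> EN N")
          case True
          have t1: "t k = 1" using True by (simp add: t_def y_def)
          have "c \<le> f' y" using True f'nn by (simp add: f'_def)
          then show ?thesis using t1 N1 shift[of 0] by simp
        next
          case False
          obtain n where n: "n \<in> {1..N}" "\<not> S D n y \<le> real n * c"
            using False yE unfolding EN_def by auto
          define P where "P = (\<lambda>n. 1 \<le> n \<and> real n * c < S D n y)"
          have Pn: "P n" using n by (auto simp: P_def)
          have tkP: "t k = Least P" using False by (simp add: t_def y_def P_def)
          have PL: "P (Least P)" by (rule LeastI[of P n]) (rule Pn)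
          have Ln: "Least P \<le> n" by (rule Least_le) (rule Pn)
          have "real (t k) * c < S D (t k) y" using PL tkP by (simp add: P_def)
          also have "S D (t k) y \<le> (\<Sum>j<t k. f' ((T^^j) y))"
            unfolding S_def using c by (intro sum_mono) (simp add: f'_def)
          also have "\<dots> = (\<Sum>j<t k. f' ((T^^(k+j)) x))" using shift by simp
          finally show ?thesis using PL tkP Ln n by (auto simp: P_def)
        qed
      qed
      have "(real L - real N) * c \<le> (\<Sum>j<L. f' ((T ^^ j) x))"
        by (rule block_sum[of "\<lambda>j. f' ((T ^^ j) x)" c t N L]) (use f'nn c tk in auto)
      then show ?thesis using True by simp
    qed
    have mono: "integral\<^sup>L M (\<lambda>x. (real L - real N) * c * indicator (E D c) x)
        \<le> integral\<^sup>L M (\<lambda>x. \<Sum>j<L. f' ((T ^^ j) x))"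
    proof (rule integral_mono)
      show "integrable M (\<lambda>x. (real L - real N) * c * indicator (E D c) x)"
        by (rule integrable_const_bound[where B="abs ((real L - real N) * c)"]) (auto simp: indicator_def)
      show "integrable M (\<lambda>x. \<Sum>j<L. f' ((T ^^ j) x))"
        by (rule t3)
      show "\<And>x. x \<in> space M \<Longrightarrow> (real L - real N) * c * indicator (E D c) x \<le> (\<Sum>j<L. f' ((T ^^ j) x))"
        using pw by auto
    qed
    have r1: "integral\<^sup>L M (\<lambda>x. \<Sum>j<L. f' ((T ^^ j) x)) = (\<Sum>j<L. integral\<^sup>L M (\<lambda>x. f' ((T ^^ j) x)))"
      by (rule Bochner_Integration.integral_sum) (rule intn)
    have r2: "(\<Sum>j<L. integral\<^sup>L M (\<lambda>x. f' ((T ^^ j) x))) = real L * integral\<^sup>L M f'"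
      using integral_Tn[OF f'm] by simp
    have r3: "integral\<^sup>L M f' = measure M D + c * measure M (EN N)"
    proof -
      have "integral\<^sup>L M f' = integral\<^sup>L M (indicator D) + integral\<^sup>L M (\<lambda>x. c * indicator (EN N) x)"
        unfolding f'_def
        by (intro Bochner_Integration.integral_add integrable_const_bound[where B="abs c"] integrable_const_bound[where B=1])
           (auto simp: indicator_def)
      also have "\<dots> = measure M (D \<inter> space M) + c * measure M (EN N \<inter> space M)" by simp
      also have "D \<inter> space M = D" using D sets.sets_into_space by blast
      also have "EN N \<inter> space M = EN N" using EN_sets sets.sets_into_space by blast
      finally show ?thesis .
    qed
    have l1: "integral\<^sup>L M (\<lambda>x. (real L - real N) * c * indicator (E D c) x) = (real L - real N) * c * measure M (E D c \<inter> space M)"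
      by simp
    have l2: "E D c \<inter> space M = E D c" using Em sets.sets_into_space by blast
    show ?thesis using mono r1 r2 r3 l1 l2 by simp
  qed
  have step: "c * measure M (E D c) \<le> measure M D + c * measure M (EN N)" if N1: "N \<ge> 1" for N
  proof -
    define X where "X L = (1 - real N / real L) * (c * measure M (E D c))" for L :: nat
    have "X \<longlonglongrightarrow> (1 - 0) * (c * measure M (E D c))"
      unfolding X_def by (intro tendsto_intros)
    then have X: "X \<longlonglongrightarrow> c * measure M (E D c)" by simp
    show ?thesis
    proof (rule LIMSEQ_le_const2[OF X], intro exI allI impI)
      fix L :: nat assume L: "L \<ge> 1"
      then have Lp: "0 < real L" by simp
      have "X L = ((real L - real N) * c * measure M (E D c)) / real L"
        unfolding X_def using Lp by (simp add: field_simps)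
      also have "\<dots> \<le> (real L * (measure M D + c * measure M (EN N))) / real L"
        using key[OF N1, of L] Lp by (intro divide_right_mono) auto
      also have "\<dots> = measure M D + c * measure M (EN N)" using Lp by simp
      finally show "X L \<le> measure M D + c * measure M (EN N)" .
    qed
  qed
  have "(\<lambda>N. measure M D + c * measure M (EN N)) \<longlonglongrightarrow> measure M D + c * 0"
    by (intro tendsto_intros limEN)
  then have lim2: "(\<lambda>N. measure M D + c * measure M (EN N)) \<longlonglongrightarrow> measure M D" by simp
  show ?thesis
  proof (rule LIMSEQ_le_const[OF lim2])
    show "\<exists>N. \<forall>n\<ge>N. c * measure M (E D c) \<le> measure M D + c * measure M (EN n)"
      using step by blast
  qed
qed

lemma erg_main:
  assumes D[measurable]: "D \<in> sets M" and c: "measure M D < c"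
  shows "(\<lambda>n. measure M {x \<in> space M. c \<le> S D n x / real n}) \<longlonglongrightarrow> 0"
proof -
  define c1 where "c1 = (measure M D + c) / 2"
  have m0: "0 \<le> measure M D" by (rule measure_nonneg)
  have x1: "0 < measure M D + c" using c m0 by linarith
  have c1a: "0 < c1" unfolding c1_def using x1 by simp
  have c1b: "measure M D < c1" unfolding c1_def using c by (simp add: field_simps)
  have c1c: "c1 < c" unfolding c1_def using c by (simp add: field_simps)
  note c1 = c1a c1b c1c
  have Em[measurable]: "E D c1 \<in> sets M" by (rule E_sets) simp
  have kw: "c1 * measure M (E D c1) \<le> measure M D" by (rule KW) (use c1 in auto)
  have "measure M (E D c1) \<noteq> 1" using kw c1 by auto
  then have E0: "measure M (E D c1) = 0" using T_erg[OF Em E_inv] by auto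
  have AEg: "AE x in M. g D x \<le> ereal c1"
  proof -
    have "{x \<in> space M. \<not> g D x \<le> ereal c1} = E D c1" unfolding E_def by (auto simp: not_le)
    moreover have "emeasure M (E D c1) = 0" using E0 by (metis emeasure_eq_measure ennreal_0)
    ultimately show ?thesis using AE_iff_measurable[OF Em, of "\<lambda>x. g D x \<le> ereal c1"] by simp
  qed
  have AEev: "AE x in M. eventually (\<lambda>n. S D n x / real n < c) sequentially"
    using AEg
  proof eventually_elim
    case (elim x)
    have cc: "ereal c1 < ereal c" using c1 by simp
    from elim have "limsup (\<lambda>n. ereal (S D n x / real n)) \<le> ereal c1" unfolding g_def by simp
    then have "limsup (\<lambda>n. ereal (S D n x / real n)) < ereal c" using cc by (rule le_less_trans)
    from Limsup_lessD[OF this] show ?case by simp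
  qed
  define B where "B n = {x \<in> space M. c \<le> S D n x / real n}" for n
  have Bm[measurable]: "B n \<in> sets M" for n
  proof -
    have f: "(\<lambda>x. S D n x / real n) \<in> borel_measurable M" by (intro borel_measurable_divide S_meas D) simp
    have "B n = (\<lambda>x. S D n x / real n) -` {c..} \<inter> space M" by (auto simp: B_def)
    also have "\<dots> \<in> sets M" by (rule measurable_sets[OF f]) simp
    finally show ?thesis .
  qed
  have "(\<lambda>n. integral\<^sup>L M (indicator (B n) :: 'a \<Rightarrow> real)) \<longlonglongrightarrow> integral\<^sup>L M (\<lambda>x. 0 :: real)"
  proof (rule integral_dominated_convergence[where w="\<lambda>x. 1"])
    show "(\<lambda>x. 0::real) \<in> borel_measurable M" by simp
    show "\<And>n. (indicator (B n) :: 'a \<Rightarrow> real) \<in> borel_measurable M" by simp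
    show "integrable M (\<lambda>x. 1::real)" by simp
    show "AE x in M. (\<lambda>n. indicator (B n) x :: real) \<longlonglongrightarrow> 0"
      using AEev
    proof eventually_elim
      case (elim x)
      then have "eventually (\<lambda>n. (indicator (B n) x :: real) = 0) sequentially"
        by eventually_elim (auto simp: B_def)
      then show ?case by (rule tendsto_eventually)
    qed
    show "\<And>n. AE x in M. norm (indicator (B n) x :: real) \<le> 1"
      by (rule AE_I2) (simp add: indicator_def)
  qed
  moreover have "integral\<^sup>L M (indicator (B n) :: 'a \<Rightarrow> real) = measure M (B n)" for n
  proof -
    have "B n \<inter> space M = B n" by (auto simp: B_def)
    then show ?thesis by simp
  qed
  ultimately show ?thesis unfolding B_def by simp
qed

end

lemma space_seq_M: "space seq_M = UNIV"
  unfolding seq_M_def by (simp add: space_PiM)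

lemma coord_meas[measurable]: "(\<lambda>x. x i) \<in> seq_M \<rightarrow>\<^sub>M (count_space UNIV :: 'a measure)"
  unfolding seq_M_def by (rule measurable_component_singleton) simp

lemma subword_meas:
  "(\<lambda>y. subword y 0 n) \<in> seq_M \<rightarrow>\<^sub>M (count_space UNIV :: ('a::finite) list measure)"
proof (subst measurable_count_space_eq2_countable, intro conjI ballI)
  show "(\<lambda>y. subword y 0 n) \<in> space seq_M \<rightarrow> UNIV" by simp
  fix w :: "'a list"
  show "(\<lambda>y. subword y 0 n) -` {w} \<inter> space seq_M \<in> sets seq_M"
  proof (cases "length w = n")
    case True
    have "(\<lambda>y. subword y 0 n) -` {w} \<inter> space seq_M = (\<Inter>i\<in>{..<n}. (\<lambda>y. y (int i)) -` {w ! i} \<inter> space seq_M)"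
    proof -
      have "subword y 0 n = w \<longleftrightarrow> (\<forall>i<n. y (int i) = w ! i)" for y :: "int \<Rightarrow> 'a"
        using True unfolding subword_def by (auto simp: list_eq_iff_nth_eq)
      then show ?thesis using True by (auto simp: space_seq_M)
    qed
    also have "\<dots> \<in> sets seq_M"
    proof (cases "n = 0")
      case True
      then have "(\<Inter>i\<in>{..<n}. (\<lambda>y. y (int i)) -` {w ! i} \<inter> space seq_M) = (UNIV :: (int \<Rightarrow> 'a) set)" by simp
      also have "\<dots> = space seq_M" by (simp add: space_seq_M)
      finally show ?thesis by simp
    next
      case False
      then show ?thesis by (intro sets.finite_INT measurable_sets[OF coord_meas]) auto
    qed
    finally show ?thesis .
  next
    case False
    then have "(\<lambda>y. subword y 0 n) -` {w} \<inter> space seq_M = {}"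
      unfolding subword_def by auto
    then show ?thesis by simp
  qed
qed

lemma subword_sets: "{y. subword y 0 n \<in> W} \<in> sets (seq_M :: (int \<Rightarrow> 'a::finite) measure)"
proof -
  have "{y. subword y 0 n \<in> W} = (\<lambda>y. subword y 0 n) -` W \<inter> space seq_M"
    by (auto simp: space_seq_M)
  also have "\<dots> \<in> sets seq_M" by (rule measurable_sets[OF subword_meas]) simp
  finally show ?thesis .
qed

lemma neq0_sets: "{p. fst p 0 \<noteq> snd p 0} \<in> sets (seq_M \<Otimes>\<^sub>M seq_M :: ((int \<Rightarrow> 'a::finite) \<times> (int \<Rightarrow> 'a)) measure)"
proof -
  have "{p :: (int \<Rightarrow> 'a) \<times> (int \<Rightarrow> 'a). fst p 0 \<noteq> snd p 0}
      = (\<Union>a\<in>UNIV. ((\<lambda>p. fst p 0) -` {a} \<inter> space (seq_M \<Otimes>\<^sub>M seq_M)) \<inter> ((\<lambda>p. snd p 0) -` (UNIV - {a}) \<inter> space (seq_M \<Otimes>\<^sub>M seq_M)))"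
    by (auto simp: space_pair_measure space_seq_M)
  also have "\<dots> \<in> sets (seq_M \<Otimes>\<^sub>M seq_M)"
  proof -
    have m1: "(\<lambda>p :: (int \<Rightarrow> 'a) \<times> (int \<Rightarrow> 'a). fst p 0) \<in> seq_M \<Otimes>\<^sub>M seq_M \<rightarrow>\<^sub>M count_space UNIV"
      by (rule measurable_compose[OF measurable_fst coord_meas])
    have m2: "(\<lambda>p :: (int \<Rightarrow> 'a) \<times> (int \<Rightarrow> 'a). snd p 0) \<in> seq_M \<Otimes>\<^sub>M seq_M \<rightarrow>\<^sub>M count_space UNIV"
      by (rule measurable_compose[OF measurable_snd coord_meas])
    have A: "(\<lambda>p :: (int \<Rightarrow> 'a) \<times> (int \<Rightarrow> 'a). fst p 0) -` {a} \<inter> space (seq_M \<Otimes>\<^sub>M seq_M) \<in> sets (seq_M \<Otimes>\<^sub>M seq_M)" for a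
      using measurable_sets[OF m1, of "{a}"] by simp
    have B: "(\<lambda>p :: (int \<Rightarrow> 'a) \<times> (int \<Rightarrow> 'a). snd p 0) -` (UNIV - {a}) \<inter> space (seq_M \<Otimes>\<^sub>M seq_M) \<in> sets (seq_M \<Otimes>\<^sub>M seq_M)" for a
      using measurable_sets[OF m2, of "UNIV - {a}"] by simp
    have AB: "\<forall>a\<in>UNIV. ((\<lambda>p :: (int \<Rightarrow> 'a) \<times> (int \<Rightarrow> 'a). fst p 0) -` {a} \<inter> space (seq_M \<Otimes>\<^sub>M seq_M)) \<inter> ((\<lambda>p. snd p 0) -` (UNIV - {a}) \<inter> space (seq_M \<Otimes>\<^sub>M seq_M)) \<in> sets (seq_M \<Otimes>\<^sub>M seq_M)"
      using A B by blast
    show ?thesis by (rule sets.finite_UN) (use AB in auto)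
  qed
  finally show ?thesis .
qed

lemma shift_pow: "(shift ^^ j) x = (\<lambda>i. x (i + int j))"
  by (induction j arbitrary: x) (simp_all add: shift_def funpow_Suc_right algebra_simps del: funpow.simps)

lemma shift2_pow: "(shift2 ^^ j) (x, y) = ((shift ^^ j) x, (shift ^^ j) y)"
  by (induction j) (auto simp: shift2_def)

lemma shift_in: "shift_space X \<Longrightarrow> x \<in> X \<Longrightarrow> (shift ^^ j) x \<in> X"
  by (induction j) (auto simp: shift_space_def)

lemma subword_lang: "x \<in> X \<Longrightarrow> subword x 0 n \<in> language X n"
  unfolding language_def by blast

lemma hamming_subword:
  "hamming (subword y 0 n) (subword x 0 n) = card {j. j < n \<and> x (int j) \<noteq> y (int j)}"
  unfolding hamming_def subword_def by (intro arg_cong[where f=card]) auto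

lemma R_words_anti: "\<epsilon> \<le> \<epsilon>' \<Longrightarrow> R_words \<epsilon>' C A \<eta> \<le> R_words \<epsilon> C A \<eta>"
  unfolding R_words_def by (rule Inf_superset_mono) auto

lemma R_rate_anti: "\<epsilon> \<le> \<epsilon>' \<Longrightarrow> R_rate \<epsilon>' X Y \<mu> \<le> R_rate \<epsilon> X Y \<mu>"
  unfolding R_rate_def
proof (rule Liminf_mono)
  assume e: "\<epsilon> \<le> \<epsilon>'"
  show "\<forall>\<^sub>F n in sequentially. R_words \<epsilon>' (language X n) (language Y n) (marginal \<mu> n) / ereal (real n)
          \<le> R_words \<epsilon> (language X n) (language Y n) (marginal \<mu> n) / ereal (real n)"
    using eventually_ge_at_top[of "1::nat"]
  proof eventually_elim
    case (elim n)
    then have "0 < ereal (real n)" by simp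
    then show ?case by (intro ereal_divide_right_mono R_words_anti e)
  qed
qed

lemma R_zero_le:
  assumes "\<And>\<epsilon>. 0 < \<epsilon> \<Longrightarrow> R_rate \<epsilon> X Y \<mu> \<le> b"
  shows "R_zero X Y \<mu> \<le> b"
proof -
  define f where "f \<epsilon> = R_rate \<epsilon> X Y \<mu>" for \<epsilon>
  define l where "l = (SUP \<epsilon>\<in>{0<..}. f \<epsilon>)"
  have "(f \<longlongrightarrow> l) (at_right 0)"
  proof (rule increasing_tendsto)
    show "\<forall>\<^sub>F \<epsilon> in at_right 0. f \<epsilon> \<le> l"
      unfolding eventually_at_right_field l_def
      by (intro exI[of _ 1]) (auto intro: SUP_upper)
    fix x assume "x < l"
    then obtain \<epsilon>0 where e0: "0 < \<epsilon>0" "x < f \<epsilon>0" unfolding l_def less_SUP_iff by auto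
    show "\<forall>\<^sub>F \<epsilon> in at_right 0. x < f \<epsilon>"
      unfolding eventually_at_right_field
    proof (intro exI[of _ \<epsilon>0] conjI allI impI)
      fix y :: real assume "0 < y" "y < \<epsilon>0"
      then have "f \<epsilon>0 \<le> f y" unfolding f_def by (intro R_rate_anti) simp
      then show "x < f y" using e0 by simp
    qed (use e0 in simp)
  qed
  then have "R_zero X Y \<mu> = l" unfolding R_zero_def f_def[abs_def] by (intro tendsto_Lim) simp_all
  also have "l \<le> b" unfolding l_def f_def by (rule SUP_least) (use assms in auto)
  finally show ?thesis .
qed

lemma sum_ind_card: "(\<Sum>j<(n::nat). indicator S j :: real) = real (card ({..<n} \<inter> S))"
proof -
  have a: "(\<Sum>j<n. indicator S j :: nat) = card ({..<n} \<inter> S)" by (rule sum_indicator_eq_card) simp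
  have b: "(\<Sum>j<n. indicator S j :: real) = (\<Sum>j<n. real (indicator S j :: nat))"
    by (intro sum.cong refl) (simp add: indicator_def)
  have c: "(\<Sum>j<n. real (indicator S j :: nat)) = real (\<Sum>j<n. indicator S j :: nat)"
    by (rule of_nat_sum[symmetric])
  show ?thesis using a b c by simp
qed

theorem proposition21:
  fixes X Y :: "(int \<Rightarrow> 'a::finite) set" and \<mu> :: "(int \<Rightarrow> 'a) measure"
  assumes "shift_space X" and "shift_space Y" and "ergodic_on Y \<mu>"
  shows "R_zero X Y \<mu> \<le>
    Inf {ereal (measure \<nu> {(x, y) \<in> X \<times> Y. x 0 \<noteq> y 0}) | \<nu>. \<nu> \<in> ergodic_extensions X Y \<mu>}"
proof -
  note sX = assms(1) and sY = assms(2) and eY = assms(3)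
  from eY have s\<mu>: "sets \<mu> = sets seq_M" and p\<mu>: "prob_space \<mu>" and Y1: "emeasure \<mu> Y = 1"
    unfolding ergodic_on_def by auto
  interpret m: prob_space \<mu> by (rule p\<mu>)
  have Ys: "Y \<in> sets seq_M" using Y1 emeasure_notin_sets[of Y \<mu>] s\<mu> by force
  have sp\<mu>: "space \<mu> = UNIV" using sets_eq_imp_space_eq[OF s\<mu>] space_seq_M by simp
  have key: "R_zero X Y \<mu> \<le> ereal (measure \<nu> {(x, y) \<in> X \<times> Y. x 0 \<noteq> y 0})"
    if \<nu>: "\<nu> \<in> ergodic_extensions X Y \<mu>" for \<nu>
  proof (rule R_zero_le)
    fix \<epsilon> :: real assume \<epsilon>: "0 < \<epsilon>"
    from \<nu> have s\<nu>: "sets \<nu> = sets (seq_M \<Otimes>\<^sub>M seq_M)" and p\<nu>: "prob_space \<nu>"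
      and XY1: "emeasure \<nu> (X \<times> Y) = 1" and e\<nu>: "ergodic_measure \<nu> shift2"
      and ext: "\<And>A. A \<in> sets seq_M \<Longrightarrow> A \<subseteq> Y \<Longrightarrow> measure \<nu> (X \<times> A) = measure \<mu> A"
      unfolding ergodic_extensions_def by auto
    interpret e: erg \<nu> shift2
      using p\<nu> e\<nu> unfolding erg_def erg_axioms_def ergodic_measure_def invariant_measure_def by auto
    define D where "D = {(x, y) \<in> X \<times> Y. x 0 \<noteq> y 0}"
    define d where "d = measure \<nu> D"
    have XYs: "X \<times> Y \<in> sets \<nu>" using XY1 emeasure_notin_sets[of "X \<times> Y" \<nu>] by force
    have sp\<nu>: "space \<nu> = UNIV"
      using sets_eq_imp_space_eq[OF s\<nu>] by (simp add: space_pair_measure space_seq_M)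
    have Dm: "D \<in> sets \<nu>"
    proof -
      have "D = (X \<times> Y) \<inter> {p. fst p 0 \<noteq> snd p 0}" unfolding D_def by auto
      also have "\<dots> \<in> sets \<nu>" using XYs neq0_sets s\<nu> by auto
      finally show ?thesis .
    qed
    have XYm: "measure \<nu> (X \<times> Y) = 1" using XY1 by (simp add: measure_def)
    have "R_rate \<epsilon> X Y \<mu> \<le> ereal d"
    proof (rule ereal_le_epsilon2)
      fix \<delta> :: real assume \<delta>: "0 < \<delta>"
      have d0: "0 \<le> d" unfolding d_def by simp
      define B where "B n = {p \<in> space \<nu>. d + \<delta> \<le> e.S D n p / real n}" for n
      have lim: "(\<lambda>n. measure \<nu> (B n)) \<longlonglongrightarrow> 0"
        unfolding B_def using e.erg_main[OF Dm, of "d + \<delta>"] \<delta> d_def by simp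
      have ev: "eventually (\<lambda>n. measure \<nu> (B n) < \<epsilon>) sequentially"
        using lim \<epsilon> by (rule order_tendstoD(2))
      have "eventually (\<lambda>n. R_words \<epsilon> (language X n) (language Y n) (marginal \<mu> n) / ereal (real n) \<le> ereal (d + \<delta>)) sequentially"
        using ev eventually_ge_at_top[of "1::nat"]
      proof eventually_elim
        case (elim n)
        then have n1: "1 \<le> n" and Bn: "measure \<nu> (B n) < \<epsilon>" by auto
        have np: "0 < real n" using n1 by simp
        define r where "r = nat \<lfloor>(d + \<delta>) * real n\<rfloor>"
        define W where "W = language Y n \<inter> (\<Union>c\<in>language X n. hball c r)"
        define A' where "A' = {y. subword y 0 n \<in> W}"
        have A's: "A' \<in> sets seq_M" unfolding A'_def by (rule subword_sets)
        have Bs: "B n \<in> sets \<nu>"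
        proof -
          have f: "(\<lambda>p. e.S D n p / real n) \<in> borel_measurable \<nu>"
            by (intro borel_measurable_divide e.S_meas Dm) simp
          have "B n = (\<lambda>p. e.S D n p / real n) -` {d + \<delta>..} \<inter> space \<nu>" by (auto simp: B_def)
          also have "\<dots> \<in> sets \<nu>" by (rule measurable_sets[OF f]) simp
          finally show ?thesis .
        qed
        have Scard: "e.S D n (x, y) = real (card {j. j < n \<and> x (int j) \<noteq> y (int j)})"
          if xy: "x \<in> X" "y \<in> Y" for x y
        proof -
          have "e.S D n (x, y) = (\<Sum>j<n. indicator {j. x (int j) \<noteq> y (int j)} j)"
            unfolding e.S_def
          proof (intro sum.cong refl)
            fix j assume "j \<in> {..<n}"
            have "(shift2 ^^ j) (x, y) = ((shift ^^ j) x, (shift ^^ j) y)" by (rule shift2_pow)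
            moreover have "(shift ^^ j) x \<in> X" "(shift ^^ j) y \<in> Y" using shift_in sX sY xy by auto
            ultimately have "(shift2 ^^ j) (x, y) \<in> D \<longleftrightarrow> x (int j) \<noteq> y (int j)"
              unfolding D_def by (simp add: shift_pow)
            then show "indicator D ((shift2 ^^ j) (x, y)) = (indicator {j. x (int j) \<noteq> y (int j)} j :: real)"
              by (simp add: indicator_def)
          qed
          also have "\<dots> = real (card ({..<n} \<inter> {j. x (int j) \<noteq> y (int j)}))"
            by (rule sum_ind_card)
          also have "{..<n} \<inter> {j. x (int j) \<noteq> y (int j)} = {j. j < n \<and> x (int j) \<noteq> y (int j)}" by auto
          finally show ?thesis .
        qed
        have incl: "(X \<times> Y) - B n \<subseteq> X \<times> (Y \<inter> A')"
        proof
          fix p assume p: "p \<in> (X \<times> Y) - B n"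
          obtain x y where pxy: "p = (x, y)" by (cases p)
          have x: "x \<in> X" and y: "y \<in> Y" using p pxy by auto
          have "\<not> d + \<delta> \<le> e.S D n (x, y) / real n" using p pxy sp\<nu> by (auto simp: B_def)
          then have "e.S D n (x, y) < (d + \<delta>) * real n" using np by (simp add: field_simps)
          then have lt: "real (card {j. j < n \<and> x (int j) \<noteq> y (int j)}) < (d + \<delta>) * real n"
            using Scard[OF x y] by simp
          have "int (card {j. j < n \<and> x (int j) \<noteq> y (int j)}) \<le> \<lfloor>(d + \<delta>) * real n\<rfloor>"
            using lt by (simp add: le_floor_iff)
          then have cr: "card {j. j < n \<and> x (int j) \<noteq> y (int j)} \<le> r"
            unfolding r_def by linarith
          have "subword y 0 n \<in> hball (subword x 0 n) r"
            unfolding hball_def using cr hamming_subword[of y n x] by (simp add: subword_def)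
          then have "subword y 0 n \<in> W"
            unfolding W_def using subword_lang[OF x] subword_lang[OF y] by blast
          then show "p \<in> X \<times> (Y \<inter> A')" using pxy x y by (simp add: A'_def)
        qed
        have YA's: "Y \<inter> A' \<in> sets seq_M" using Ys A's by blast
        have XAs: "X \<times> (Y \<inter> A') \<in> sets \<nu>"
        proof -
          have "X \<times> (Y \<inter> A') = (X \<times> Y) \<inter> (space seq_M \<times> A')" by (auto simp: space_seq_M)
          moreover have "space seq_M \<times> A' \<in> sets \<nu>" using s\<nu> A's by (simp add: pair_measureI)
          ultimately show ?thesis using XYs by simp
        qed
        have "1 = measure \<nu> (((X \<times> Y) - B n) \<union> ((X \<times> Y) \<inter> B n))" using XYm
          by (metis Diff_partition Int_lower1 Un_Diff_Int)
        also have "\<dots> = measure \<nu> ((X \<times> Y) - B n) + measure \<nu> ((X \<times> Y) \<inter> B n)"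
          using XYs Bs by (intro e.finite_measure_Union) auto
        also have "measure \<nu> ((X \<times> Y) \<inter> B n) \<le> measure \<nu> (B n)"
          using Bs by (intro e.finite_measure_mono) auto
        also have "measure \<nu> ((X \<times> Y) - B n) \<le> measure \<nu> (X \<times> (Y \<inter> A'))"
          using incl XAs by (rule e.finite_measure_mono)
        also have "measure \<nu> (X \<times> (Y \<inter> A')) = measure \<mu> (Y \<inter> A')"
          using ext[OF YA's] by simp
        also have "measure \<mu> (Y \<inter> A') \<le> marginal \<mu> n W"
          unfolding marginal_def
        proof (rule m.finite_measure_mono)
          show "Y \<inter> A' \<subseteq> {x \<in> space \<mu>. subword x 0 n \<in> W}" by (auto simp: sp\<mu> A'_def)
          have "{x \<in> space \<mu>. subword x 0 n \<in> W} = A'" by (auto simp: sp\<mu> A'_def)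
          then show "{x \<in> space \<mu>. subword x 0 n \<in> W} \<in> sets \<mu>" using A's s\<mu> by simp
        qed
        finally have mar: "1 - \<epsilon> \<le> marginal \<mu> n W" using Bn by simp
        have "R_words \<epsilon> (language X n) (language Y n) (marginal \<mu> n) \<le> ereal (real r)"
          unfolding R_words_def using mar unfolding W_def by (intro Inf_lower) blast
        also have "real r \<le> (d + \<delta>) * real n"
        proof -
          have "0 \<le> (d + \<delta>) * real n" using d0 \<delta> by simp
          then show ?thesis unfolding r_def by linarith
        qed
        then have "ereal (real r) \<le> ereal ((d + \<delta>) * real n)" by simp
        finally have "R_words \<epsilon> (language X n) (language Y n) (marginal \<mu> n) / ereal (real n)
            \<le> ereal ((d + \<delta>) * real n) / ereal (real n)"
          using np by (intro ereal_divide_right_mono) auto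
        also have "ereal ((d + \<delta>) * real n) / ereal (real n) = ereal (d + \<delta>)"
          using np by simp
        finally show ?case .
      qed
      then have "R_rate \<epsilon> X Y \<mu> \<le> ereal (d + \<delta>)"
        unfolding R_rate_def
        by (intro order_trans[OF Liminf_le_Limsup Limsup_bounded]) simp_all
      then show "R_rate \<epsilon> X Y \<mu> \<le> ereal d + ereal \<delta>" by simp
    qed
    then show "R_rate \<epsilon> X Y \<mu> \<le> ereal (measure \<nu> {(x, y) \<in> X \<times> Y. x 0 \<noteq> y 0})"
      unfolding d_def D_def .
  qed
  show ?thesis by (rule Inf_greatest) (use key in auto)
qed

end
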